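(* Let $d\ge1$ and $\alpha>1$. For every $\zeta>0$ there exist $\theta>0$ and $N=N(\theta)\in\mathbb{N}$ such that for every $n>N$, every $s\in\{1,\dots,n\}$, every $n$-path $\gamma$ and every configuration $\omega'\subset\mathbb{N}\times\mathbb{R}^d$ having the $\theta$-property (with respect to $n$), at least one of the following holds: (i) $\max\{\Delta\gamma(s),\Delta\gamma(s+1)\}\le n^{\zeta}$; (ii) there exist an $n$-path $\gamma'$ and an integer $k>0$ such that $\gamma(i)=\gamma'(i)$ for all $i\notin[s,s+k-1]$, $(i,\gamma'(i))\in\omega'$ for all $i\in[s,s+k-1]$, and \[T_n(\gamma')+(k+1)n^{\theta}\le T_n(\gamma).\]
   Context: An $n$-path is a map $\gamma:\{1,\dots,n\}\to\mathbb{R}^d$; we write $\gamma(k)$ for its $k$-th point and use the convention $\gamma(0)=0$. For $x\in\mathbb{R}^d$, $|x|_1=\sum_i|x_i|$, and $\Delta\gamma(k)=|\gamma(k)-\gamma(k-1)|_1$. The passage time of an $n$-path is $T_n(\gamma)=\sum_{i=1}^n\Delta\gamma(i)^\alpha$. A configuration $\omega\subset\mathbb{N}\times\mathbb{R}^d$ has the $\theta$-property (for given $n$) if $\omega\cap(\{i\}\times(x+[0,n^\theta)^d))\neq\emptyset$ for every $i\in\mathbb{N}$ and every $x\in\mathbb{Z}^d$. *)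

theory Defs
  imports "HOL-Analysis.Analysis"
begin

text \<open>Points of R^d are represented as vectors of type real^'d (d = CARD('d) \<ge> 1).
An n-path is represented by a function nat \<Rightarrow> real^'d of which only the values
at 1..n matter; the convention gamma(0) = 0 is built into path_pt.\<close>

definition l1norm :: "real^'d \<Rightarrow> real" where
  "l1norm x = (\<Sum>j\<in>UNIV. \<bar>x $ j\<bar>)"

definition path_pt :: "(nat \<Rightarrow> real^'d) \<Rightarrow> nat \<Rightarrow> real^'d" where
  "path_pt \<gamma> k = (if k = 0 then 0 else \<gamma> k)"

definition Delta :: "(nat \<Rightarrow> real^'d) \<Rightarrow> nat \<Rightarrow> real" where
  "Delta \<gamma> k = l1norm (path_pt \<gamma> k - path_pt \<gamma> (k - 1))"

definition passage_time :: "real \<Rightarrow> nat \<Rightarrow> (nat \<Rightarrow> real^'d) \<Rightarrow> real" where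
  "passage_time \<alpha> n \<gamma> = (\<Sum>i=1..n. Delta \<gamma> i powr \<alpha>)"

definition theta_property :: "real \<Rightarrow> nat \<Rightarrow> (nat \<times> (real^'d)) set \<Rightarrow> bool" where
  "theta_property \<theta> n \<omega> \<longleftrightarrow>
     (\<forall>i::nat. i \<ge> 1 \<longrightarrow> (\<forall>x::real^'d. (\<forall>j. x $ j \<in> \<int>) \<longrightarrow>
        (\<exists>y. (\<forall>j. x $ j \<le> y $ j \<and> y $ j < x $ j + real n powr \<theta>) \<and> (i, y) \<in> \<omega>)))"

end

theory Submission
  imports Defs
begin

lemma powr_convex0:
  assumes "(p::real) \<ge> 1" shows "convex_on {0..} (\<lambda>x::real. x powr p)"
proof (rule convex_onI)
  fix t x y :: real
  assume t: "0 < t" "t < 1" and x: "x \<in> {0..}" and y: "y \<in> {0..}"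
  show "((1 - t) *\<^sub>R x + t *\<^sub>R y) powr p \<le> (1 - t) * x powr p + t * y powr p"
  proof (cases "x > 0 \<and> y > 0")
    case True
    then show ?thesis using convex_onD[OF powr_convex[OF assms], of t x y] t by auto
  next
    case False
    then have "x = 0 \<or> y = 0" using x y by auto
    then show ?thesis
    proof
      assume x0: "x = 0"
      have "(t * y) powr p = t powr p * y powr p" using t y by (simp add: powr_mult)
      also have "\<dots> \<le> t * y powr p"
        using t assms by (intro mult_right_mono) (auto intro: powr_le_one_le[of t p, simplified] simp: powr_mono2'[of p t 1, simplified])
      finally show ?thesis using x0 by simp
    next
      assume y0: "y = 0"
      have "((1-t) * x) powr p = (1-t) powr p * x powr p" using t x by (simp add: powr_mult)
      also have "\<dots> \<le> (1-t) * x powr p"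
        using t assms by (intro mult_right_mono) (auto intro: powr_le_one_le)
      finally show ?thesis using y0 by simp
    qed
  qed
qed simp


lemma power_mean:
  fixes x :: "'a \<Rightarrow> real"
  assumes "finite I" "I \<noteq> {}" "\<And>i. i \<in> I \<Longrightarrow> x i \<ge> 0" "p \<ge> 1"
  shows "((\<Sum>i\<in>I. x i) / card I) powr p \<le> (\<Sum>i\<in>I. x i powr p) / card I"
proof -
  have c: "card I > 0" using assms by (simp add: card_gt_0_iff)
  have "(\<lambda>x. x powr p) (\<Sum>i\<in>I. (1 / card I) *\<^sub>R x i) \<le> (\<Sum>i\<in>I. (1 / card I) * (x i powr p))"
    using assms c by (intro convex_on_sum[OF assms(1,2) powr_convex0]) auto
  then show ?thesis by (simp add: sum_divide_distrib[symmetric] sum_distrib_left[symmetric])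
qed

lemma diff_powr: "(x::real) > 0 \<Longrightarrow> (\<lambda>x. x powr p) differentiable (at x)"
  using has_real_derivative_powr real_differentiable_def by blast

lemma mvt_powr:
  fixes y e p :: real
  assumes "y > 0" "e \<ge> 0" "p \<ge> 1"
  shows "(y + e) powr p - y powr p \<le> e * p * (y + e) powr (p - 1)"
proof (cases "e = 0")
  case True then show ?thesis by simp
next
  case False
  then have lt: "y < y + e" using assms by simp
  have "\<exists>l z. y < z \<and> z < y + e \<and> DERIV (\<lambda>x. x powr p) z :> l \<and> (y+e) powr p - y powr p = (y + e - y) * l"
    using assms by (intro MVT[OF lt]) (auto intro!: continuous_intros diff_powr)
  then obtain l z where z: "y < z" "z < y + e" "DERIV (\<lambda>x. x powr p) z :> l" "(y+e) powr p - y powr p = e * l"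
    by auto
  have "l = p * z powr (p - 1)"
    using DERIV_unique[OF z(3) has_real_derivative_powr] z assms by auto
  moreover have "z powr (p - 1) \<le> (y + e) powr (p - 1)"
    using z assms by (intro powr_mono2) auto
  ultimately show ?thesis using z assms
    by (simp add: mult_left_mono mult.assoc)
qed

lemma psi_pos:
  fixes p t :: real
  assumes "p > 1" "0 \<le> t" "t < 1"
  shows "((1 + t) / 2) powr p < (1 + t powr p) / 2"
proof -
  define u where "u = (1 + t) / 2"
  have tu: "t < u" "u < 1" using assms by (auto simp: u_def)
  have ut: "1 - u = u - t" by (simp add: u_def field_simps)
  have "\<exists>l z. u < z \<and> z < 1 \<and> DERIV (\<lambda>x. x powr p) z :> l \<and> 1 powr p - u powr p = (1 - u) * l"
    using assms tu by (intro MVT[OF tu(2)]) (auto intro!: continuous_intros diff_powr)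
  then obtain l1 z1 where z1: "u < z1" "z1 < 1" "DERIV (\<lambda>x. x powr p) z1 :> l1" "1 powr p - u powr p = (1 - u) * l1"
    by blast
  have "\<exists>l z. t < z \<and> z < u \<and> DERIV (\<lambda>x. x powr p) z :> l \<and> u powr p - t powr p = (u - t) * l"
    using assms tu by (intro MVT[OF tu(1)] continuous_on_powr') (auto intro!: continuous_intros diff_powr)
  then obtain l2 z2 where z2: "t < z2" "z2 < u" "DERIV (\<lambda>x. x powr p) z2 :> l2" "u powr p - t powr p = (u - t) * l2"
    by blast
  have l1: "l1 = p * z1 powr (p - 1)"
    using DERIV_unique[OF z1(3) has_real_derivative_powr] z1 tu assms by auto
  have l2: "l2 = p * z2 powr (p - 1)"
    using DERIV_unique[OF z2(3) has_real_derivative_powr] z2 tu assms by auto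
  have "z2 powr (p - 1) < z1 powr (p - 1)"
    using z1 z2 assms by (intro powr_less_mono2) auto
  then have "l2 < l1" using l1 l2 assms by simp
  then have "(u - t) * l2 < (1 - u) * l1" using ut tu by (metis diff_gt_0_iff_gt mult_strict_left_mono)
  then show ?thesis using z1(4) z2(4) by (simp add: u_def[symmetric] field_simps)
qed

lemma psi_min:
  fixes p g :: real
  assumes "p > 1" "0 \<le> g" "g < 1"
  shows "\<exists>c>0. \<forall>t\<in>{0..g}. c \<le> (1 + t powr p) / 2 - ((1 + t) / 2) powr p"
proof -
  let ?f = "\<lambda>t. (1 + t powr p) / 2 - ((1 + t) / 2) powr p"
  have "continuous_on {0..g} ?f"
    using assms by (intro continuous_intros continuous_on_powr') auto
  then obtain t0 where t0: "t0 \<in> {0..g}" "\<forall>t\<in>{0..g}. ?f t0 \<le> ?f t"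
    using continuous_attains_inf[of "{0..g}" ?f] assms by auto
  have "?f t0 > 0" using psi_pos[of p t0] assms t0 by auto
  then show ?thesis using t0 by blast
qed


lemma block_step:
  fixes p g c0 Q P P' G G' e \<tau> :: real
  assumes p: "p > 1" and g: "0 \<le> g" "g < 1" and c0: "c0 > 0"
    and psi: "\<forall>t\<in>{0..g}. c0 \<le> (1 + t powr p) / 2 - ((1 + t) / 2) powr p"
    and Q: "Q > 0" "P \<ge> Q" and P': "P' \<ge> 0"
    and G: "0 \<le> G" "G \<le> P powr (1/p)" and G': "0 \<le> G'" "G' \<le> P' powr (1/p)"
    and e: "e \<ge> 0" "e \<le> Q powr (1/p)" "e * p * 2 powr p \<le> c0 * Q powr (1/p)"
    and tau: "2 * \<tau> < c0 * Q"
    and fail: "(P + P') / 2 < ((G + G') / 2 + e) powr p + \<tau>"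
  shows "P' \<ge> g powr p * P"
proof (rule ccontr)
  assume neg: "\<not> P' \<ge> g powr p * P"
  define a where "a = P powr (1/p)"
  define b where "b = P' powr (1/p)"
  have Ppos: "P > 0" using Q by simp
  have apos: "a > 0" using Ppos by (simp add: a_def)
  have b0: "b \<ge> 0" by (simp add: b_def)
  have aP: "a powr p = P" using Ppos p by (simp add: a_def powr_powr)
  have bP: "b powr p = P'" using P' p by (simp add: b_def powr_powr)
  have "b powr p < (g * a) powr p" using neg aP bP g apos by (simp add: powr_mult)
  then have bga: "b < g * a"
  proof -
    assume h: "b powr p < (g * a) powr p"
    show ?thesis
    proof (rule ccontr)
      assume "\<not> b < g * a"
      then have "(g * a) powr p \<le> b powr p" using p g apos by (intro powr_mono2) auto
      then show False using h by simp
    qed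
  qed
  define t where "t = b / a"
  have t: "0 \<le> t" "t \<le> g" using bga apos b0 by (auto simp: t_def divide_simps)
  have bt: "b = t * a" using apos by (simp add: t_def)
  have "c0 \<le> (1 + t powr p) / 2 - ((1 + t) / 2) powr p" using psi t by auto
  then have "c0 * P \<le> ((1 + t powr p) / 2 - ((1 + t) / 2) powr p) * a powr p"
    using aP Ppos by (simp add: mult_right_mono)
  also have "\<dots> = (P + P') / 2 - ((a + b) / 2) powr p"
  proof -
    have "t powr p * a powr p = P'" using bP bt t apos by (simp add: powr_mult)
    moreover have "((1 + t) / 2) powr p * a powr p = ((a + b) / 2) powr p"
      using t apos bt by (simp add: powr_mult[symmetric] algebra_simps)
    ultimately show ?thesis using aP by (simp add: algebra_simps)
  qed
  finally have c0P: "c0 * P \<le> (P + P') / 2 - ((a + b) / 2) powr p" .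
  define y where "y = (a + b) / 2"
  have ypos: "y > 0" using apos b0 by (simp add: y_def)
  have "g * a \<le> a" using g apos by (simp add: mult_le_cancel_right1)
  then have ya: "y \<le> a" using bga by (simp add: y_def)
  have aQ: "Q powr (1/p) \<le> a" using Q p by (simp add: a_def powr_mono2)
  have "((G + G') / 2 + e) powr p \<le> (y + e) powr p"
    using G G' e p by (intro powr_mono2) (auto simp: y_def a_def b_def)
  also have "\<dots> \<le> y powr p + e * p * (y + e) powr (p - 1)"
    using mvt_powr[OF ypos e(1), of p] p by simp
  also have "e * p * (y + e) powr (p - 1) \<le> e * p * (2 * a) powr (p - 1)"
    using ya e aQ p ypos by (intro mult_left_mono powr_mono2) auto
  finally have "(P + P') / 2 < y powr p + e * p * (2 * a) powr (p - 1) + \<tau>"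
    using fail by simp
  with c0P have A: "c0 * P < e * p * (2 * a) powr (p - 1) + \<tau>" unfolding y_def by linarith
  have "e * p * (2 * a) powr (p - 1) = (e * p * 2 powr p) * a powr (p - 1) / 2"
    using apos by (simp add: powr_mult powr_diff)
  also have "\<dots> \<le> (c0 * a) * a powr (p - 1) / 2"
  proof -
    have "c0 * Q powr (1/p) \<le> c0 * a" using aQ c0 by simp
    then have "e * p * 2 powr p \<le> c0 * a" using e by linarith
    then show ?thesis by (intro divide_right_mono mult_right_mono) auto
  qed
  also have "\<dots> = c0 * P / 2"
    using apos aP by (simp add: powr_diff powr_one_gt_zero_iff)
  finally have B: "e * p * (2 * a) powr (p - 1) \<le> c0 * P / 2" .
  have "c0 * Q \<le> c0 * P" using Q c0 by simp
  then have C: "\<tau> < c0 * P / 2" using tau by linarith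
  show False using A B C by simp
qed


lemma root_le:
  assumes "(u::real) \<ge> 0" "p > 0" "u powr p \<le> v"
  shows "u \<le> v powr (1/p)"
proof -
  have "u = (u powr p) powr (1/p)" using assms by (simp add: powr_powr)
  also have "\<dots> \<le> v powr (1/p)" using assms by (intro powr_mono2) auto
  finally show ?thesis .
qed

lemma block_mean:
  fixes x :: "nat \<Rightarrow> real"
  assumes "\<And>j. x j \<ge> 0" "p > 1" "a < b"
  shows "(\<Sum>j\<in>{a..<b}. x j) / (b - a) \<le> ((\<Sum>j\<in>{a..<b}. x j powr p) / (b - a)) powr (1/p)"
proof -
  have "((\<Sum>j\<in>{a..<b}. x j) / card {a..<b}) powr p \<le> (\<Sum>j\<in>{a..<b}. x j powr p) / card {a..<b}"
    using assms by (intro power_mean) auto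
  then show ?thesis by (intro root_le) (use assms in \<open>auto intro!: sum_nonneg divide_nonneg_nonneg\<close>)
qed

lemma core:
  fixes x :: "nat \<Rightarrow> real" and p g c0 Q e \<tau> L :: real and K :: nat
  assumes x0: "\<And>j. x j \<ge> 0"
    and p: "p > 1" and g: "0 \<le> g" "g < 1" and c0: "c0 > 0"
    and psi: "\<forall>t\<in>{0..g}. c0 \<le> (1 + t powr p) / 2 - ((1 + t) / 2) powr p"
    and Q: "Q > 0" and e: "e \<ge> 0" "e \<le> Q powr (1/p)" "e * p * 2 powr p \<le> c0 * Q powr (1/p)"
    and tau: "\<tau> \<ge> 0" "2 * \<tau> < c0 * Q"
    and QC3: "2 * e powr p + 4 * \<tau> \<le> Q"
    and L: "L \<ge> 0" "2 * Q \<le> L powr p"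
    and growth: "\<And>j. 2 ^ (j + 1) \<le> K \<Longrightarrow> Q \<le> (L powr p / 2) * ((1 + g powr p) / 2) ^ j"
    and K: "K \<ge> 1"
    and H1: "\<And>W. 2 \<le> W \<Longrightarrow> W \<le> K \<Longrightarrow>
        (\<Sum>j<W. x j powr p) < W * ((\<Sum>j<W. x j) / W + e) powr p + W * \<tau>"
    and H2: "(\<Sum>j<K. x j powr p) < K * e powr p + (K + 1) * \<tau>"
    and H3: "x 0 > L \<or> (2 \<le> K \<and> x 1 > L)"
  shows False
proof -
  define A where "A W = (\<Sum>j<W. x j powr p)" for W
  define S where "S W = (\<Sum>j<W. x j)" for W
  define \<beta> where "\<beta> = (1 + g powr p) / 2"
  have Amono: "A V \<le> A W" if "V \<le> W" for V W
    unfolding A_def using that by (intro sum_mono2) auto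
  have xL: "x j powr p \<ge> L powr p" if "x j > L" for j
    using that L p by (intro powr_mono2) auto
  have ind: "2 ^ (j + 1) \<le> K \<longrightarrow> A (2 ^ (j + 1)) \<ge> 2 ^ (j + 1) * ((L powr p / 2) * \<beta> ^ j)" for j
  proof (induction j)
    case 0
    show ?case
    proof
      assume "2 ^ (0 + 1) \<le> K"
      have "A 2 = x 0 powr p + x 1 powr p" by (simp add: A_def numeral_2_eq_2)
      moreover have "x 0 powr p + x 1 powr p \<ge> L powr p"
        using H3 xL[of 0] xL[of 1] by (smt (verit) powr_ge_zero)
      ultimately show "A (2 ^ (0 + 1)) \<ge> 2 ^ (0 + 1) * ((L powr p / 2) * \<beta> ^ 0)" by simp
    qed
  next
    case (Suc j)
    show ?case
    proof
      assume K2: "2 ^ (Suc j + 1) \<le> K"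
      define W :: nat where "W = 2 ^ (j + 1)"
      have W2: "2 ^ (Suc j + 1) = 2 * W" by (simp add: W_def)
      have WK: "W \<le> K" "2 * W \<le> K" using K2 W2 by auto
      have Wpos: "W > 0" by (simp add: W_def)
      have IH: "A W \<ge> W * ((L powr p / 2) * \<beta> ^ j)" using Suc WK by (simp add: W_def)
      define P where "P = A W / W"
      define P' where "P' = (A (2 * W) - A W) / W"
      define G where "G = S W / W"
      define G' where "G' = (S (2 * W) - S W) / W"
      have PL: "P \<ge> (L powr p / 2) * \<beta> ^ j" using IH Wpos by (simp add: P_def field_simps)
      have PQ: "P \<ge> Q" using PL growth[of j] WK by (simp add: W_def \<beta>_def)
      have splitA: "A (2 * W) = A W + (\<Sum>j\<in>{W..<2*W}. x j powr p)"
        unfolding A_def by (simp add: lessThan_atLeast0 sum.atLeastLessThan_concat)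
      have splitS: "S (2 * W) = S W + (\<Sum>j\<in>{W..<2*W}. x j)"
        unfolding S_def by (simp add: lessThan_atLeast0 sum.atLeastLessThan_concat)
      have P'0: "P' \<ge> 0" using splitA by (simp add: P'_def x0 sum_nonneg)
      have G0: "G \<ge> 0" "G' \<ge> 0" using splitS by (auto simp: G_def G'_def S_def x0 sum_nonneg)
      have GP: "G \<le> P powr (1/p)"
        using block_mean[OF x0 p, of 0 W] Wpos by (simp add: G_def P_def S_def A_def lessThan_atLeast0)
      have GP': "G' \<le> P' powr (1/p)"
        using block_mean[OF x0 p, of W "2*W"] Wpos splitA splitS by (simp add: G'_def P'_def mult_2)
      have f: "A (2 * W) < (2 * W) * (S (2 * W) / (2 * W) + e) powr p + (2 * W) * \<tau>"
        using H1[of "2 * W"] WK Wpos unfolding A_def S_def by simp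
      have eq1: "A (2 * W) / (2 * W) = (P + P') / 2" using Wpos by (simp add: P_def P'_def field_simps)
      have eq2: "S (2 * W) / (2 * W) = (G + G') / 2" using Wpos by (simp add: G_def G'_def field_simps)
      have f': "A (2 * W) < (2 * W) * (((G + G') / 2 + e) powr p + \<tau>)"
        using f unfolding eq2 by (simp add: algebra_simps)
      have D: "real (2 * W) > 0" using Wpos by simp
      have "A (2 * W) / real (2 * W) < ((G + G') / 2 + e) powr p + \<tau>"
        unfolding pos_divide_less_eq[OF D] using f' by (simp add: mult.commute)
      then have fail: "(P + P') / 2 < ((G + G') / 2 + e) powr p + \<tau>"
        using eq1 by simp
      have "P' \<ge> g powr p * P"
        using block_step[OF p g c0 psi Q PQ P'0 G0(1) GP G0(2) GP' e tau(2) fail] .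
      then have "A (2 * W) \<ge> W * (2 * \<beta>) * P"
        using Wpos splitA by (simp add: P_def P'_def \<beta>_def field_simps)
      also have "W * (2 * \<beta>) * P \<ge> W * (2 * \<beta>) * ((L powr p / 2) * \<beta> ^ j)"
        using PL Wpos g by (intro mult_left_mono) (auto simp: \<beta>_def)
      finally have X: "A (2 * W) \<ge> W * (2 * \<beta>) * ((L powr p / 2) * \<beta> ^ j)" .
      have "real W = 2 * 2 ^ j" by (simp add: W_def)
      then show "A (2 ^ (Suc j + 1)) \<ge> 2 ^ (Suc j + 1) * ((L powr p / 2) * \<beta> ^ Suc j)"
        using X W2 by (simp add: field_simps)
    qed
  qed
  show False
  proof (cases "K \<ge> 2")
    case False
    then have K1: "K = 1" using K by simp
    then have "x 0 > L" using H3 by simp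
    then have "A K \<ge> L powr p" using K1 xL[of 0] by (simp add: A_def)
    then show False using H2 K1 L QC3 tau powr_ge_zero[of e p] unfolding A_def by simp
  next
    case True
    define J where "J = Max {j. 2 ^ (j + 1) \<le> K}"
    have fin: "finite {j. 2 ^ (j + 1) \<le> K}"
    proof (rule finite_subset[of _ "{..K}"])
      show "{j. 2 ^ (j + 1) \<le> K} \<subseteq> {..K}"
      proof
        fix j assume "j \<in> {j. 2 ^ (j + 1) \<le> K}"
        then have "2 ^ (j + 1) \<le> K" by simp
        moreover have "j < 2 ^ (j + 1)" by (metis less_exp less_trans lessI power_Suc Suc_eq_plus1)
        ultimately show "j \<in> {..K}" by simp
      qed
    qed simp
    have ne: "0 \<in> {j. 2 ^ (j + 1) \<le> K}" using True by simp
    have "J \<in> {j. 2 ^ (j + 1) \<le> K}" unfolding J_def using Max_in[OF fin] ne by blast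
    then have J1: "2 ^ (J + 1) \<le> K" by simp
    have J2: "K < 2 ^ (J + 2)"
    proof (rule ccontr)
      assume "\<not> K < 2 ^ (J + 2)"
      then have "J + 1 \<in> {j. 2 ^ (j + 1) \<le> K}" by simp
      then show False using Max_ge[OF fin] J_def by fastforce
    qed
    have "A K \<ge> A (2 ^ (J + 1))" using J1 Amono by simp
    also have "A (2 ^ (J + 1)) \<ge> 2 ^ (J + 1) * Q"
      using ind[of J] J1 growth[of J] by (smt (verit) mult_left_mono zero_le_power \<beta>_def)
    finally have AK: "A K \<ge> 2 ^ (J + 1) * Q" .
    have "real K < real (2 ^ (J + 2))" using J2 by (simp only: of_nat_less_iff)
    then have "real K < 2 * 2 ^ (J + 1)" by simp
    then have "real K * Q \<le> 2 * (2 ^ (J + 1) * Q)" using Q by simp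
    with AK have "real K * Q \<le> 2 * A K" by simp
    moreover have "real K * Q \<ge> real K * (2 * e powr p + 4 * \<tau>)" using QC3 by (intro mult_left_mono) auto
    moreover have "(K + 1) * \<tau> \<le> 2 * K * \<tau>" using K tau by (simp add: mult_right_mono)
    ultimately show False using H2 unfolding A_def by (simp add: algebra_simps)
  qed
qed


lemma l1norm_nonneg: "l1norm x \<ge> 0"
  unfolding l1norm_def by (simp add: sum_nonneg)

lemma l1norm_triangle: "l1norm (x + y) \<le> l1norm x + l1norm y"
  unfolding l1norm_def by (simp add: sum.distrib[symmetric] sum_mono abs_triangle_ineq)

lemma l1norm_commute: "l1norm (x - y) = l1norm (y - x)"
  unfolding l1norm_def by (simp add: abs_minus_commute)

lemma l1norm_scale: "l1norm (c *\<^sub>R x) = \<bar>c\<bar> * l1norm x"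
  unfolding l1norm_def by (simp add: abs_mult sum_distrib_left)

lemma l1norm_box: "(\<And>j. \<bar>x $ j\<bar> \<le> (r::real)) \<Longrightarrow> l1norm (x::real^'d) \<le> real CARD('d) * r"
  unfolding l1norm_def using sum_mono[of UNIV "\<lambda>j. \<bar>x $ j\<bar>" "\<lambda>_. r"] by simp

lemma l1norm_tri3: "l1norm (a - d) \<le> l1norm (a - b) + l1norm (b - c) + l1norm (c - d)"
proof -
  have "a - d = (a - b) + ((b - c) + (c - d))" by simp
  then have "l1norm (a - d) \<le> l1norm (a - b) + l1norm ((b - c) + (c - d))"
    by (metis l1norm_triangle)
  also have "\<dots> \<le> l1norm (a - b) + (l1norm (b - c) + l1norm (c - d))"
    using l1norm_triangle by (metis add_left_mono)
  finally show ?thesis by simp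
qed

lemma l1norm_telescope:
  fixes f :: "nat \<Rightarrow> real^'d"
  shows "k \<le> m \<Longrightarrow> l1norm (f m - f k) \<le> (\<Sum>i\<in>{k<..m}. l1norm (f i - f (i - 1)))"
proof (induction m)
  case 0
  then show ?case by (simp add: l1norm_def)
next
  case (Suc m)
  show ?case
  proof (cases "k = Suc m")
    case True
    then show ?thesis by (simp add: l1norm_def)
  next
    case False
    then have km: "k \<le> m" using Suc by simp
    have "f (Suc m) - f k = (f (Suc m) - f m) + (f m - f k)" by simp
    then have "l1norm (f (Suc m) - f k) \<le> l1norm (f (Suc m) - f m) + l1norm (f m - f k)"
      by (metis l1norm_triangle)
    also have "\<dots> \<le> l1norm (f (Suc m) - f m) + (\<Sum>i\<in>{k<..m}. l1norm (f i - f (i - 1)))"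
      using Suc km by simp
    also have "\<dots> = (\<Sum>i\<in>{k<..Suc m}. l1norm (f i - f (i - 1)))"
    proof -
      have "{k<..Suc m} = insert (Suc m) {k<..m}" using km by auto
      then show ?thesis by simp
    qed
    finally show ?thesis .
  qed
qed

lemma theta_near:
  fixes \<omega> :: "(nat \<times> (real^'d)) set"
  assumes th: "theta_property \<theta> n \<omega>" and i: "i \<ge> 1" and one: "1 \<le> real n powr \<theta>"
  shows "\<exists>y. (i, y) \<in> \<omega> \<and> l1norm (y - q) \<le> CARD('d) * real n powr \<theta>"
proof -
  define x :: "real^'d" where "x = (\<chi> j. of_int \<lfloor>q $ j\<rfloor>)"
  have xint: "\<forall>j. x $ j \<in> \<int>" by (simp add: x_def)
  obtain y where y: "\<forall>j. x $ j \<le> y $ j \<and> y $ j < x $ j + real n powr \<theta>" "(i, y) \<in> \<omega>"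
    using th i xint unfolding theta_property_def by blast
  have "\<bar>(y - q) $ j\<bar> \<le> real n powr \<theta>" for j
  proof -
    have "x $ j \<le> q $ j" "q $ j < x $ j + 1" unfolding x_def by (simp_all add: of_int_floor_le)
    then show ?thesis using y(1)[rule_format, of j] one by auto
  qed
  then show ?thesis using y(2) l1norm_box by blast
qed


lemma construct:
  fixes \<gamma> :: "nat \<Rightarrow> real^'d" and \<omega> :: "(nat \<times> (real^'d)) set" and q :: "nat \<Rightarrow> real^'d"
  assumes th: "theta_property \<theta> n \<omega>" and one: "1 \<le> real n powr \<theta>" and s: "s \<ge> 1"
  shows "\<exists>\<gamma>'. (\<forall>i. (i < s \<or> i > t) \<longrightarrow> \<gamma>' i = \<gamma> i) \<and>
    (\<forall>i\<in>{s..t}. (i, \<gamma>' i) \<in> \<omega> \<and> l1norm (\<gamma>' i - q i) \<le> real CARD('d) * real n powr \<theta>)"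
proof -
  define P where "P i y \<longleftrightarrow> (i, y) \<in> \<omega> \<and> l1norm (y - q i) \<le> real CARD('d) * real n powr \<theta>" for i y
  define \<gamma>' where "\<gamma>' i = (if s \<le> i \<and> i \<le> t then (SOME y. P i y) else \<gamma> i)" for i
  have "P i (SOME y. P i y)" if "i \<ge> s" for i
  proof -
    have "i \<ge> 1" using that s by simp
    then have "\<exists>y. P i y" unfolding P_def using theta_near[OF th _ one] by blast
    then show ?thesis by (rule someI_ex)
  qed
  then have h: "\<forall>i\<in>{s..t}. P i (\<gamma>' i)" by (simp add: \<gamma>'_def)
  moreover have "\<forall>i. (i < s \<or> i > t) \<longrightarrow> \<gamma>' i = \<gamma> i" by (simp add: \<gamma>'_def)
  ultimately show ?thesis unfolding P_def by blast
qed

lemma delta_agree: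
  assumes "\<forall>i. (i < s \<or> i > t) \<longrightarrow> \<gamma>' i = \<gamma> i" "i < s \<or> i > t + 1"
  shows "Delta \<gamma>' i = Delta \<gamma> i"
  using assms unfolding Delta_def path_pt_def by auto

lemma passage_diff:
  assumes ag: "\<forall>i. (i < s \<or> i > t) \<longrightarrow> \<gamma>' i = \<gamma> i" and s: "s \<ge> 1"
  shows "passage_time \<alpha> n \<gamma> - passage_time \<alpha> n \<gamma>' =
    (\<Sum>i\<in>{s..min (t + 1) n}. Delta \<gamma> i powr \<alpha> - Delta \<gamma>' i powr \<alpha>)"
proof -
  have "passage_time \<alpha> n \<gamma> - passage_time \<alpha> n \<gamma>' = (\<Sum>i=1..n. Delta \<gamma> i powr \<alpha> - Delta \<gamma>' i powr \<alpha>)"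
    unfolding passage_time_def by (simp add: sum_subtractf)
  also have "\<dots> = (\<Sum>i\<in>{s..min (t + 1) n}. Delta \<gamma> i powr \<alpha> - Delta \<gamma>' i powr \<alpha>)"
  proof (rule sum.mono_neutral_right)
    show "{s..min (t + 1) n} \<subseteq> {1..n}" using s by auto
    show "\<forall>i\<in>{1..n} - {s..min (t + 1) n}. Delta \<gamma> i powr \<alpha> - Delta \<gamma>' i powr \<alpha> = 0"
    proof
      fix i assume "i \<in> {1..n} - {s..min (t + 1) n}"
      then have "i < s \<or> i > t + 1" by auto
      then show "Delta \<gamma> i powr \<alpha> - Delta \<gamma>' i powr \<alpha> = 0" using delta_agree[OF ag] by simp
    qed
  qed simp
  finally show ?thesis .
qed

lemma gen:
  fixes \<gamma> :: "nat \<Rightarrow> real^'d" and \<omega> :: "(nat \<times> (real^'d)) set" and q :: "nat \<Rightarrow> real^'d"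
  assumes th: "theta_property \<theta> n \<omega>" and one: "1 \<le> real n powr \<theta>" and s: "s \<ge> 1"
    and st: "s \<le> t" "t \<le> n" and \<alpha>: "\<alpha> > 0"
    and q0: "q (s - 1) = path_pt \<gamma> (s - 1)"
    and q1: "t + 1 \<le> n \<Longrightarrow> q (t + 1) = path_pt \<gamma> (t + 1)"
    and B: "\<And>i. i \<in> {s..min (t + 1) n} \<Longrightarrow>
       l1norm (q i - q (i - 1)) + 2 * real CARD('d) * real n powr \<theta> \<le> B"
  shows "\<exists>\<gamma>'. (\<forall>i. (i < s \<or> i > t) \<longrightarrow> \<gamma>' i = \<gamma> i) \<and> (\<forall>i\<in>{s..t}. (i, \<gamma>' i) \<in> \<omega>) \<and>
    passage_time \<alpha> n \<gamma> - passage_time \<alpha> n \<gamma>' \<ge>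
      (\<Sum>i\<in>{s..min (t + 1) n}. Delta \<gamma> i powr \<alpha>) - real (card {s..min (t + 1) n}) * B powr \<alpha>"
proof -
  obtain \<gamma>' where ag: "\<forall>i. (i < s \<or> i > t) \<longrightarrow> \<gamma>' i = \<gamma> i"
    and in\<omega>: "\<forall>i\<in>{s..t}. (i, \<gamma>' i) \<in> \<omega> \<and> l1norm (\<gamma>' i - q i) \<le> real CARD('d) * real n powr \<theta>"
    using construct[OF th one s, of t \<gamma> q] by blast
  define r where "r = real CARD('d) * real n powr \<theta>"
  have near: "l1norm (path_pt \<gamma>' i - q i) \<le> r" if ii: "i \<in> {s - 1..min (t + 1) n}" for i
  proof -
    have r0: "r \<ge> 0" by (simp add: r_def)
    consider "i = s - 1" | "i \<in> {s..t}" | "i = t + 1" "t + 1 \<le> n" using ii st by force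
    then show ?thesis
    proof cases
      case 1
      then have "path_pt \<gamma>' i = path_pt \<gamma> i" using ag s unfolding path_pt_def by auto
      then show ?thesis using 1 q0 r0 by (simp add: l1norm_def)
    next
      case 2
      then have "path_pt \<gamma>' i = \<gamma>' i" using s unfolding path_pt_def by auto
      then show ?thesis using 2 in\<omega> by (simp add: r_def)
    next
      case 3
      then have "path_pt \<gamma>' i = path_pt \<gamma> i" using ag s unfolding path_pt_def by auto
      then show ?thesis using 3 q1 r0 by (simp add: l1norm_def)
    qed
  qed
  have DB: "Delta \<gamma>' i \<le> B" if i: "i \<in> {s..min (t + 1) n}" for i
  proof -
    have "Delta \<gamma>' i = l1norm (path_pt \<gamma>' i - path_pt \<gamma>' (i - 1))" by (simp add: Delta_def)
    also have "\<dots> \<le> l1norm (path_pt \<gamma>' i - q i) + l1norm (q i - q (i - 1)) + l1norm (q (i - 1) - path_pt \<gamma>' (i - 1))"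
      by (rule l1norm_tri3)
    also have "\<dots> \<le> r + l1norm (q i - q (i - 1)) + r"
    proof -
      have "l1norm (path_pt \<gamma>' i - q i) \<le> r" using near i by auto
      moreover have "l1norm (q (i - 1) - path_pt \<gamma>' (i - 1)) \<le> r"
      proof -
        have "i - 1 \<in> {s - 1..min (t + 1) n}" using i by auto
        then have "l1norm (path_pt \<gamma>' (i - 1) - q (i - 1)) \<le> r" by (rule near)
        then show ?thesis using l1norm_commute[of "q (i - 1)" "path_pt \<gamma>' (i - 1)"] by simp
      qed
      ultimately show ?thesis by simp
    qed
    also have "\<dots> \<le> B" using B[OF i] by (simp add: r_def)
    finally show ?thesis .
  qed
  have "(\<Sum>i\<in>{s..min (t + 1) n}. Delta \<gamma>' i powr \<alpha>) \<le> (\<Sum>i\<in>{s..min (t + 1) n}. B powr \<alpha>)"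
    using DB \<alpha> by (intro sum_mono powr_mono2) (auto simp: Delta_def l1norm_nonneg)
  then have "passage_time \<alpha> n \<gamma> - passage_time \<alpha> n \<gamma>' \<ge>
      (\<Sum>i\<in>{s..min (t + 1) n}. Delta \<gamma> i powr \<alpha>) - real (card {s..min (t + 1) n}) * B powr \<alpha>"
    unfolding passage_diff[OF ag s] by (simp add: sum_subtractf)
  then show ?thesis using ag in\<omega> by blast
qed


lemma sum_shift_ivl: "(W::nat) \<ge> 1 \<Longrightarrow> (\<Sum>i\<in>{s..s + W - 1}. f i) = (\<Sum>j<W. f ((s::nat) + j))"
proof -
  assume W: "W \<ge> 1"
  have "{s..s + W - 1} = (\<lambda>j. s + j) ` {..<W}"
  proof
    show "{s..s + W - 1} \<subseteq> (\<lambda>j. s + j) ` {..<W}"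
    proof
      fix i assume "i \<in> {s..s + W - 1}"
      then have i: "s \<le> i" "i \<le> s + W - 1" by auto
      have "i = s + (i - s)" using i by arith
      moreover have "i - s < W" using i W by arith
      ultimately show "i \<in> (\<lambda>j. s + j) ` {..<W}" by blast
    qed
  qed (use W in auto)
  then show ?thesis by (simp add: sum.reindex)
qed

definition cond_ii :: "real \<Rightarrow> real \<Rightarrow> nat \<Rightarrow> nat \<Rightarrow> (nat \<Rightarrow> real^'d) \<Rightarrow> (nat \<times> (real^'d)) set \<Rightarrow> bool" where
  "cond_ii \<alpha> \<theta> n s \<gamma> \<omega>' \<longleftrightarrow> (\<exists>\<gamma>'::nat \<Rightarrow> real^'d. \<exists>k::nat. k > 0 \<and> s + k - 1 \<le> n \<and>
           (\<forall>i\<in>{1..n}. (i < s \<or> i > s + k - 1) \<longrightarrow> \<gamma> i = \<gamma>' i) \<and>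
           (\<forall>i\<in>{s..s + k - 1}. (i, \<gamma>' i) \<in> \<omega>') \<and>
           passage_time \<alpha> n \<gamma>' + real (k + 1) * real n powr \<theta> \<le> passage_time \<alpha> n \<gamma>)"

lemma win:
  fixes \<gamma> :: "nat \<Rightarrow> real^'d" and \<omega> :: "(nat \<times> (real^'d)) set"
  assumes th: "theta_property \<theta> n \<omega>" and one: "1 \<le> real n powr \<theta>" and s: "s \<ge> 1"
    and \<alpha>: "\<alpha> > 0" and W: "2 \<le> W" "s + W - 1 \<le> n"
    and big: "(\<Sum>j<W. Delta \<gamma> (s + j) powr \<alpha>) \<ge>
      W * ((\<Sum>j<W. Delta \<gamma> (s + j)) / W + 2 * real CARD('d) * real n powr \<theta>) powr \<alpha> + W * real n powr \<theta>"
  shows "cond_ii \<alpha> \<theta> n s \<gamma> \<omega>"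
proof -
  define a where "a = path_pt \<gamma> (s - 1)"
  define e where "e = path_pt \<gamma> (s + W - 1)"
  define q where "q i = a + ((real i - real (s - 1)) / W) *\<^sub>R (e - a)" for i
  define t where "t = s + W - 2"
  define \<epsilon> where "\<epsilon> = 2 * real CARD('d) * real n powr \<theta>"
  define B where "B = l1norm (e - a) / W + \<epsilon>"
  have Wp: "real W > 0" using W by simp
  have t1: "t + 1 = s + W - 1" "s \<le> t" "t \<le> n" using W by (auto simp: t_def)
  have mn: "min (t + 1) n = s + W - 1" using t1 W by simp
  have q0: "q (s - 1) = path_pt \<gamma> (s - 1)" by (simp add: q_def a_def)
  have q1: "q (t + 1) = path_pt \<gamma> (t + 1)"
  proof -
    have "real (s + W - 1) - real (s - 1) = real W" using s W by (simp add: of_nat_diff)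
    then have r: "(real (s + W - 1) - real (s - 1)) / real W = 1" using Wp by simp
    have "q (s + W - 1) = e" unfolding q_def r by simp
    then show ?thesis using t1(1) e_def by simp
  qed
  have Bq: "l1norm (q i - q (i - 1)) + 2 * real CARD('d) * real n powr \<theta> \<le> B"
    if "i \<in> {s..min (t + 1) n}" for i
  proof -
    have i1: "i \<ge> 1" using that s by auto
    have "real i - real (s - 1) - (real (i - 1) - real (s - 1)) = 1" using i1 by (simp add: of_nat_diff)
    then have "q i - q (i - 1) = (1 / W) *\<^sub>R (e - a)"
      unfolding q_def by (simp add: scaleR_diff_left[symmetric] diff_divide_distrib[symmetric])
    then show ?thesis using Wp by (simp add: B_def \<epsilon>_def l1norm_scale)
  qed
  obtain \<gamma>' where ag: "\<forall>i. (i < s \<or> i > t) \<longrightarrow> \<gamma>' i = \<gamma> i" and in\<omega>: "\<forall>i\<in>{s..t}. (i, \<gamma>' i) \<in> \<omega>"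
    and diff: "passage_time \<alpha> n \<gamma> - passage_time \<alpha> n \<gamma>' \<ge>
      (\<Sum>i\<in>{s..min (t + 1) n}. Delta \<gamma> i powr \<alpha>) - real (card {s..min (t + 1) n}) * B powr \<alpha>"
    using gen[OF th one s t1(2,3) \<alpha> q0 _ Bq] q1 by blast
  have card: "card {s..min (t + 1) n} = W" using mn W by simp
  have sumA: "(\<Sum>i\<in>{s..min (t + 1) n}. Delta \<gamma> i powr \<alpha>) = (\<Sum>j<W. Delta \<gamma> (s + j) powr \<alpha>)"
    unfolding mn using W by (intro sum_shift_ivl) auto
  have "l1norm (e - a) \<le> (\<Sum>i\<in>{s - 1<..s + W - 1}. l1norm (path_pt \<gamma> i - path_pt \<gamma> (i - 1)))"
    unfolding e_def a_def by (rule l1norm_telescope) simp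
  also have "{s - 1<..s + W - 1} = {s..s + W - 1}" using s by auto
  also have "(\<Sum>i\<in>{s..s + W - 1}. l1norm (path_pt \<gamma> i - path_pt \<gamma> (i - 1))) = (\<Sum>j<W. Delta \<gamma> (s + j))"
    using W by (subst sum_shift_ivl) (auto simp: Delta_def)
  finally have ea: "l1norm (e - a) \<le> (\<Sum>j<W. Delta \<gamma> (s + j))" .
  have B0: "B \<ge> 0" by (simp add: B_def \<epsilon>_def l1norm_nonneg)
  have "B \<le> (\<Sum>j<W. Delta \<gamma> (s + j)) / W + \<epsilon>"
    unfolding B_def using ea Wp by (simp add: divide_right_mono)
  then have "B powr \<alpha> \<le> ((\<Sum>j<W. Delta \<gamma> (s + j)) / W + \<epsilon>) powr \<alpha>"
    using B0 \<alpha> by (intro powr_mono2) auto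
  then have "real W * B powr \<alpha> \<le> real W * ((\<Sum>j<W. Delta \<gamma> (s + j)) / W + \<epsilon>) powr \<alpha>"
    using Wp by simp
  then have "passage_time \<alpha> n \<gamma> - passage_time \<alpha> n \<gamma>' \<ge> W * real n powr \<theta>"
    using diff big unfolding sumA card \<epsilon>_def by linarith
  moreover have "s + (W - 1) - 1 = t" "W - 1 + 1 = W" "W - 1 > 0" using W by (auto simp: t_def)
  ultimately show ?thesis unfolding cond_ii_def using ag in\<omega> t1
    by (intro exI[of _ \<gamma>'] exI[of _ "W - 1"]) auto
qed

lemma trunc:
  fixes \<gamma> :: "nat \<Rightarrow> real^'d" and \<omega> :: "(nat \<times> (real^'d)) set"
  assumes th: "theta_property \<theta> n \<omega>" and one: "1 \<le> real n powr \<theta>" and s: "s \<ge> 1" "s \<le> n"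
    and \<alpha>: "\<alpha> > 0"
    and big: "(\<Sum>j<n - s + 1. Delta \<gamma> (s + j) powr \<alpha>) \<ge>
      real (n - s + 1) * (2 * real CARD('d) * real n powr \<theta>) powr \<alpha> + real (n - s + 1 + 1) * real n powr \<theta>"
  shows "cond_ii \<alpha> \<theta> n s \<gamma> \<omega>"
proof -
  define a where "a = path_pt \<gamma> (s - 1)"
  define q where "q i = a" for i :: nat
  define B where "B = 2 * real CARD('d) * real n powr \<theta>"
  have mn: "min (n + 1) n = n" by simp
  have Bq: "l1norm (q i - q (i - 1)) + 2 * real CARD('d) * real n powr \<theta> \<le> B" for i
    by (simp add: q_def B_def l1norm_def)
  obtain \<gamma>' where ag: "\<forall>i. (i < s \<or> i > n) \<longrightarrow> \<gamma>' i = \<gamma> i" and in\<omega>: "\<forall>i\<in>{s..n}. (i, \<gamma>' i) \<in> \<omega>"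
    and diff: "passage_time \<alpha> n \<gamma> - passage_time \<alpha> n \<gamma>' \<ge>
      (\<Sum>i\<in>{s..min (n + 1) n}. Delta \<gamma> i powr \<alpha>) - real (card {s..min (n + 1) n}) * B powr \<alpha>"
    using gen[OF th one s(1) s(2) order_refl \<alpha>, of q \<gamma> B] Bq by (auto simp: q_def a_def)
  have e1: "s + (n - s + 1) - 1 = n" using s by simp
  have card: "card {s..min (n + 1) n} = n - s + 1" using s by simp
  have sumA: "(\<Sum>i\<in>{s..min (n + 1) n}. Delta \<gamma> i powr \<alpha>) = (\<Sum>j<n - s + 1. Delta \<gamma> (s + j) powr \<alpha>)"
    using sum_shift_ivl[of "n - s + 1" "\<lambda>i. Delta \<gamma> i powr \<alpha>" s] e1 by simp
  have "passage_time \<alpha> n \<gamma> - passage_time \<alpha> n \<gamma>' \<ge> real (n - s + 1 + 1) * real n powr \<theta>"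
    using diff big unfolding sumA card B_def by linarith
  then show ?thesis unfolding cond_ii_def using ag in\<omega> e1
    by (intro exI[of _ \<gamma>'] exI[of _ "n - s + 1"]) auto
qed

lemma ev_pow:
  assumes "\<delta> > 0"
  shows "eventually (\<lambda>n. M \<le> real n powr \<delta>) sequentially"
proof (rule eventually_sequentiallyI)
  fix n :: nat
  assume n: "nat \<lceil>(max M 1) powr (1 / \<delta>)\<rceil> \<le> n"
  then have "(max M 1) powr (1 / \<delta>) \<le> real n" by linarith
  then have "((max M 1) powr (1 / \<delta>)) powr \<delta> \<le> real n powr \<delta>"
    using assms by (intro powr_mono2) auto
  also have "((max M 1) powr (1 / \<delta>)) powr \<delta> = max M 1" using assms by (simp add: powr_powr)
  finally show "M \<le> real n powr \<delta>" by simp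
qed

lemma ev_cmp:
  assumes "p1 < p2" "C2 > 0"
  shows "eventually (\<lambda>n. C1 * real n powr p1 \<le> C2 * real n powr p2) sequentially"
proof -
  have "eventually (\<lambda>n. \<bar>C1\<bar> / C2 \<le> real n powr (p2 - p1)) sequentially"
    using assms by (intro ev_pow) auto
  moreover have "eventually (\<lambda>n. n \<ge> 1) sequentially" by (rule eventually_ge_at_top)
  ultimately show ?thesis
  proof eventually_elim
    case (elim n)
    then have np: "real n > 0" by simp
    have "C1 * real n powr p1 \<le> \<bar>C1\<bar> * real n powr p1" by (simp add: mult_right_mono)
    also have "\<dots> \<le> (C2 * real n powr (p2 - p1)) * real n powr p1"
      using elim assms by (intro mult_right_mono) (auto simp: divide_le_eq mult.commute)
    also have "\<dots> = C2 * real n powr p2" using np by (simp add: powr_diff field_simps)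
    finally show ?case .
  qed
qed


theorem lemma1:
  fixes \<alpha> :: real
  assumes "\<alpha> > 1"
  shows "\<forall>\<zeta>>0. \<exists>\<theta>>0. \<exists>N::nat. \<forall>n>N. \<forall>s\<in>{1..n}. \<forall>(\<gamma>::nat \<Rightarrow> real^'d). \<forall>\<omega>'.
     theta_property \<theta> n \<omega>' \<longrightarrow>
     ((Delta \<gamma> s \<le> real n powr \<zeta> \<and> (s + 1 \<le> n \<longrightarrow> Delta \<gamma> (s + 1) \<le> real n powr \<zeta>))
      \<or> (\<exists>\<gamma>'::nat \<Rightarrow> real^'d. \<exists>k::nat. k > 0 \<and> s + k - 1 \<le> n \<and>
           (\<forall>i\<in>{1..n}. (i < s \<or> i > s + k - 1) \<longrightarrow> \<gamma> i = \<gamma>' i) \<and>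
           (\<forall>i\<in>{s..s + k - 1}. (i, \<gamma>' i) \<in> \<omega>') \<and>
           passage_time \<alpha> n \<gamma>' + real (k + 1) * real n powr \<theta> \<le> passage_time \<alpha> n \<gamma>))"
proof (intro allI impI)
  fix \<zeta> :: real assume \<zeta>: "\<zeta> > 0"
  have \<alpha>: "\<alpha> > 1" by (rule assms)
  define d where "d = real CARD('d)"
  have d: "d > 0" by (simp add: d_def)
  define r where "r = min (\<zeta> * \<alpha> / 4) (1 / 2)"
  define \<beta> where "\<beta> = 2 powr (- r)"
  define g where "g = (2 * \<beta> - 1) powr (1 / \<alpha>)"
  have r: "r > 0" "r \<le> 1/2" "r \<le> \<zeta> * \<alpha> / 4" using \<zeta> \<alpha> by (auto simp: r_def)
  have \<beta>1: "\<beta> < 1" unfolding \<beta>_def using r by (intro powr_less_one) auto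
  have "2 powr (-1::real) < 2 powr (- r)" using r by (intro powr_less_mono) auto
  then have \<beta>2: "2 * \<beta> - 1 > 0" by (simp add: \<beta>_def powr_minus)
  have g0: "g \<ge> 0" by (simp add: g_def)
  have "g < 1 powr (1 / \<alpha>)" unfolding g_def using \<beta>1 \<beta>2 \<alpha> by (intro powr_less_mono2) auto
  then have g1: "g < 1" by simp
  have g\<beta>: "(1 + g powr \<alpha>) / 2 = \<beta>" using \<beta>2 \<alpha> by (simp add: g_def powr_powr)
  obtain c0 where c0: "c0 > 0" and psi: "\<forall>t\<in>{0..g}. c0 \<le> (1 + t powr \<alpha>) / 2 - ((1 + t) / 2) powr \<alpha>"
    using psi_min[OF \<alpha> g0 g1] by blast
  define \<theta> where "\<theta> = \<zeta> / 4"
  define ex where "ex = \<zeta> * \<alpha> - r"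
  have za: "\<zeta> * \<alpha> > 0" using \<zeta> \<alpha> by simp
  have ex3: "\<theta> * \<alpha> < ex" using r za by (simp add: \<theta>_def ex_def mult.commute)
  have ex1: "\<theta> < ex / \<alpha>" using ex3 \<alpha> by (simp add: less_divide_eq)
  have "\<theta> < \<theta> * \<alpha>" using \<zeta> \<alpha> by (simp add: \<theta>_def)
  then have ex2: "\<theta> < ex" using ex3 by simp
  have ex4: "ex \<le> \<zeta> * \<alpha>" using r by (simp add: ex_def)
  have "eventually (\<lambda>n. (2 * d) * real n powr \<theta> \<le> (1 / 2 powr (1 / \<alpha>)) * real n powr (ex / \<alpha>)
      \<and> (2 * d * \<alpha> * 2 powr \<alpha>) * real n powr \<theta> \<le> (c0 / 2 powr (1 / \<alpha>)) * real n powr (ex / \<alpha>)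
      \<and> 3 * real n powr \<theta> \<le> (c0 / 2) * real n powr ex
      \<and> (2 * (2 * d) powr \<alpha>) * real n powr (\<theta> * \<alpha>) \<le> (1 / 4) * real n powr ex
      \<and> 4 * real n powr \<theta> \<le> (1 / 4) * real n powr ex
      \<and> n \<ge> 1) sequentially"
    using ex1 ex2 ex3 c0
    by (intro eventually_conj ev_cmp eventually_ge_at_top) auto
  then obtain N where N: "\<And>n. n \<ge> N \<Longrightarrow>
        (2 * d) * real n powr \<theta> \<le> (1 / 2 powr (1 / \<alpha>)) * real n powr (ex / \<alpha>)
      \<and> (2 * d * \<alpha> * 2 powr \<alpha>) * real n powr \<theta> \<le> (c0 / 2 powr (1 / \<alpha>)) * real n powr (ex / \<alpha>)
      \<and> 3 * real n powr \<theta> \<le> (c0 / 2) * real n powr ex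
      \<and> (2 * (2 * d) powr \<alpha>) * real n powr (\<theta> * \<alpha>) \<le> (1 / 4) * real n powr ex
      \<and> 4 * real n powr \<theta> \<le> (1 / 4) * real n powr ex
      \<and> n \<ge> 1"
    unfolding eventually_sequentially by blast
  have \<theta>0: "\<theta> > 0" using \<zeta> by (simp add: \<theta>_def)
  show "\<exists>\<theta>>0. \<exists>N::nat. \<forall>n>N. \<forall>s\<in>{1..n}. \<forall>(\<gamma>::nat \<Rightarrow> real^'d). \<forall>\<omega>'.
     theta_property \<theta> n \<omega>' \<longrightarrow>
     ((Delta \<gamma> s \<le> real n powr \<zeta> \<and> (s + 1 \<le> n \<longrightarrow> Delta \<gamma> (s + 1) \<le> real n powr \<zeta>))
      \<or> (\<exists>\<gamma>'::nat \<Rightarrow> real^'d. \<exists>k::nat. k > 0 \<and> s + k - 1 \<le> n \<and>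
           (\<forall>i\<in>{1..n}. (i < s \<or> i > s + k - 1) \<longrightarrow> \<gamma> i = \<gamma>' i) \<and>
           (\<forall>i\<in>{s..s + k - 1}. (i, \<gamma>' i) \<in> \<omega>') \<and>
           passage_time \<alpha> n \<gamma>' + real (k + 1) * real n powr \<theta> \<le> passage_time \<alpha> n \<gamma>))"
  proof (intro exI[of _ \<theta>] conjI \<theta>0 exI[of _ N] allI impI ballI)
    fix n s and \<gamma> :: "nat \<Rightarrow> real^'d" and \<omega>' :: "(nat \<times> (real^'d)) set"
    assume nN: "N < n" and s: "s \<in> {1..n}" and th: "theta_property \<theta> n \<omega>'"
    have Nn: "(2 * d) * real n powr \<theta> \<le> (1 / 2 powr (1 / \<alpha>)) * real n powr (ex / \<alpha>)"
      "(2 * d * \<alpha> * 2 powr \<alpha>) * real n powr \<theta> \<le> (c0 / 2 powr (1 / \<alpha>)) * real n powr (ex / \<alpha>)"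
      "3 * real n powr \<theta> \<le> (c0 / 2) * real n powr ex"
      "(2 * (2 * d) powr \<alpha>) * real n powr (\<theta> * \<alpha>) \<le> (1 / 4) * real n powr ex"
      "4 * real n powr \<theta> \<le> (1 / 4) * real n powr ex"
      "n \<ge> 1" using N[of n] nN by auto
    show "(Delta \<gamma> s \<le> real n powr \<zeta> \<and> (s + 1 \<le> n \<longrightarrow> Delta \<gamma> (s + 1) \<le> real n powr \<zeta>))
      \<or> (\<exists>\<gamma>'::nat \<Rightarrow> real^'d. \<exists>k::nat. k > 0 \<and> s + k - 1 \<le> n \<and>
           (\<forall>i\<in>{1..n}. (i < s \<or> i > s + k - 1) \<longrightarrow> \<gamma> i = \<gamma>' i) \<and>
           (\<forall>i\<in>{s..s + k - 1}. (i, \<gamma>' i) \<in> \<omega>') \<and>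
           passage_time \<alpha> n \<gamma>' + real (k + 1) * real n powr \<theta> \<le> passage_time \<alpha> n \<gamma>)"
    proof (rule ccontr)
      assume neg: "\<not> ?thesis"
      then have nii: "\<not> cond_ii \<alpha> \<theta> n s \<gamma> \<omega>'" unfolding cond_ii_def by blast
      have ni: "\<not> (Delta \<gamma> s \<le> real n powr \<zeta> \<and> (s + 1 \<le> n \<longrightarrow> Delta \<gamma> (s + 1) \<le> real n powr \<zeta>))"
        using neg by blast
      have n1: "real n \<ge> 1" using Nn(6) by simp
      have np: "real n > 0" using n1 by simp
      have s1: "s \<ge> 1" "s \<le> n" using s by auto
      have one: "1 \<le> real n powr \<theta>" using n1 \<theta>0 by (simp add: ge_one_powr_ge_zero)
      define x where "x j = Delta \<gamma> (s + j)" for j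
      define Q where "Q = real n powr ex / 2"
      define e where "e = 2 * d * real n powr \<theta>"
      define \<tau> where "\<tau> = real n powr \<theta>"
      define L where "L = real n powr \<zeta>"
      define K where "K = n - s + 1"
      have x0: "\<And>j. x j \<ge> 0" by (simp add: x_def Delta_def l1norm_nonneg)
      have Q0: "Q > 0" using np by (simp add: Q_def)
      have Qpow: "Q powr (1 / \<alpha>) = (1 / 2 powr (1 / \<alpha>)) * real n powr (ex / \<alpha>)"
        by (simp add: Q_def powr_divide powr_powr)
      have e0: "e \<ge> 0" using d by (simp add: e_def)
      have e1: "e \<le> Q powr (1 / \<alpha>)" using Nn(1) unfolding Qpow e_def by simp
      have e2: "e * \<alpha> * 2 powr \<alpha> \<le> c0 * Q powr (1 / \<alpha>)"
        using Nn(2) unfolding Qpow e_def by (simp add: algebra_simps)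
      have tau0: "\<tau> \<ge> 0" by (simp add: \<tau>_def)
      have tau1: "2 * \<tau> < c0 * Q"
      proof -
        have "2 * \<tau> < 3 * \<tau>" using np by (simp add: \<tau>_def)
        also have "\<dots> \<le> c0 * Q" using Nn(3) by (simp add: \<tau>_def Q_def)
        finally show ?thesis .
      qed
      have epow: "e powr \<alpha> = (2 * d) powr \<alpha> * real n powr (\<theta> * \<alpha>)"
        using d np by (simp add: e_def powr_mult powr_powr)
      have QC3: "2 * e powr \<alpha> + 4 * \<tau> \<le> Q"
        using Nn(4) Nn(5) unfolding epow \<tau>_def Q_def by simp
      have L0: "L \<ge> 0" by (simp add: L_def)
      have Lpow: "L powr \<alpha> = real n powr (\<zeta> * \<alpha>)" by (simp add: L_def powr_powr)
      have L2: "2 * Q \<le> L powr \<alpha>"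
        unfolding Lpow Q_def using n1 ex4 by (simp add: powr_mono)
      have growth: "Q \<le> (L powr \<alpha> / 2) * ((1 + g powr \<alpha>) / 2) ^ j" if j: "2 ^ (j + 1) \<le> K" for j
      proof -
        have "real (2 ^ j) \<le> real n" using j s1 by (simp add: K_def)
        then have "real n powr (- r) \<le> (real (2 ^ j)) powr (- r)"
          using r by (intro powr_mono2') auto
        also have "(real (2 ^ j)) powr (- r) = \<beta> ^ j"
        proof -
          have e1: "real (2 ^ j) = 2 powr real j" by (simp add: powr_realpow)
          have "(real (2 ^ j)) powr (- r) = 2 powr (real j * (- r))" unfolding e1 powr_powr ..
          also have "\<dots> = \<beta> ^ j" unfolding \<beta>_def by (simp add: powr_power)
          finally show ?thesis .
        qed
        finally have b: "real n powr (- r) \<le> \<beta> ^ j" .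
        have pa: "real n powr (\<zeta> * \<alpha> - r) = real n powr (\<zeta> * \<alpha>) * real n powr (- r)"
          using powr_add[of "real n" "\<zeta> * \<alpha>" "- r"] by simp
        have "Q = (L powr \<alpha> / 2) * real n powr (- r)"
          unfolding Lpow Q_def ex_def pa by simp
        also have "\<dots> \<le> (L powr \<alpha> / 2) * \<beta> ^ j" using b by (intro mult_left_mono) auto
        finally show ?thesis unfolding g\<beta> .
      qed
      have K1: "K \<ge> 1" by (simp add: K_def)
      have H1: "(\<Sum>j<W. x j powr \<alpha>) < W * ((\<Sum>j<W. x j) / W + e) powr \<alpha> + W * \<tau>"
        if W: "2 \<le> W" "W \<le> K" for W
      proof (rule ccontr)
        assume "\<not> ?thesis"
        then have big: "(\<Sum>j<W. Delta \<gamma> (s + j) powr \<alpha>) \<ge>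
          W * ((\<Sum>j<W. Delta \<gamma> (s + j)) / W + 2 * real CARD('d) * real n powr \<theta>) powr \<alpha> + W * real n powr \<theta>"
          by (simp add: x_def e_def d_def \<tau>_def)
        have "s + W - 1 \<le> n" using W s1 by (simp add: K_def)
        then have "cond_ii \<alpha> \<theta> n s \<gamma> \<omega>'"
          using win[OF th one s1(1) _ W(1) _ big] \<alpha> by simp
        then show False using nii by simp
      qed
      have H2: "(\<Sum>j<K. x j powr \<alpha>) < real K * e powr \<alpha> + real (K + 1) * \<tau>"
      proof (rule ccontr)
        assume "\<not> ?thesis"
        then have big: "(\<Sum>j<n - s + 1. Delta \<gamma> (s + j) powr \<alpha>) \<ge>
          real (n - s + 1) * (2 * real CARD('d) * real n powr \<theta>) powr \<alpha> + real (n - s + 1 + 1) * real n powr \<theta>"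
          by (simp add: x_def e_def d_def \<tau>_def K_def)
        have "cond_ii \<alpha> \<theta> n s \<gamma> \<omega>'"
          using trunc[OF th one s1 _ big] \<alpha> by simp
        then show False using nii by simp
      qed
      have H3: "x 0 > L \<or> (2 \<le> K \<and> x 1 > L)"
        using ni s1 by (auto simp: x_def L_def K_def)
      show False
        using core[OF x0 \<alpha> g0 g1 c0 psi Q0 e0 e1 e2 tau0 tau1 QC3 L0 L2 growth K1 H1 _ H3] H2
        by simp
    qed
  qed
qed


end
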